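(* Let $i,j\geq 1$ be integers. For $n\geq 0$, let $U(i,j,n)$ be the set of all triples $(L_1,L_2,L_3)$ of walks of length $n$ with steps $(1,1)$ and $(1,-1)$, where $L_1$ starts at $(0,0)$, $L_2$ starts at $(0,2i)$ and $L_3$ starts at $(0,2i+2j)$. Let $V(i,j,n)$ be the set of triples in $U(i,j,n)$ whose three walks are pairwise nonintersecting, and for $\{a,b\}\in\{\{1,2\},\{2,3\},\{1,3\}\}$ let $M_{ab}(n)$ be the set of triples in $U(i,j,n)$ such that $L_a$ intersects $L_b$. Define $V_{i,j}(t)=\sum_{n\geq 0}|V(i,j,n)|t^n$, $U_{i,j}(t)=\sum_{n\geq 0}|U(i,j,n)|t^n$ and $M_{ab}(t)=\sum_{n\geq0}|M_{ab}(n)|t^n$. Then $$V_{i,j}(t)=U_{i,j}(t)+M_{13}(t)-M_{12}(t)-M_{23}(t).$$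
   Context: Two walks intersect if they share a common lattice point; otherwise they are nonintersecting. *)

theory Defs
  imports "HOL-Computational_Algebra.Formal_Power_Series"
begin

text \<open>A walk of length n with steps (1,1) and (1,-1) starting at (0,h) is encoded by its
  start height h and its list of vertical steps (each -1 or 1).\<close>

definition step_seqs :: "nat \<Rightarrow> int list set" where
  "step_seqs n = {s. length s = n \<and> set s \<subseteq> {-1, 1}}"

definition walk_points :: "int \<Rightarrow> int list \<Rightarrow> (int \<times> int) set" where
  "walk_points h s = {(int k, h + sum_list (take k s)) | k. k \<le> length s}"

definition walks_intersect :: "int \<Rightarrow> int list \<Rightarrow> int \<Rightarrow> int list \<Rightarrow> bool" where
  "walks_intersect h1 s1 h2 s2 \<longleftrightarrow> walk_points h1 s1 \<inter> walk_points h2 s2 \<noteq> {}"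

definition U_set :: "nat \<Rightarrow> nat \<Rightarrow> nat \<Rightarrow> (int list \<times> int list \<times> int list) set" where
  "U_set i j n = step_seqs n \<times> step_seqs n \<times> step_seqs n"

definition start1 :: "nat \<Rightarrow> nat \<Rightarrow> int" where "start1 i j = 0"
definition start2 :: "nat \<Rightarrow> nat \<Rightarrow> int" where "start2 i j = 2 * int i"
definition start3 :: "nat \<Rightarrow> nat \<Rightarrow> int" where "start3 i j = 2 * int i + 2 * int j"

definition V_set :: "nat \<Rightarrow> nat \<Rightarrow> nat \<Rightarrow> (int list \<times> int list \<times> int list) set" where
  "V_set i j n = {(s1, s2, s3) \<in> U_set i j n.
      \<not> walks_intersect (start1 i j) s1 (start2 i j) s2 \<and>
      \<not> walks_intersect (start2 i j) s2 (start3 i j) s3 \<and>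
      \<not> walks_intersect (start1 i j) s1 (start3 i j) s3}"

definition M12_set :: "nat \<Rightarrow> nat \<Rightarrow> nat \<Rightarrow> (int list \<times> int list \<times> int list) set" where
  "M12_set i j n = {(s1, s2, s3) \<in> U_set i j n. walks_intersect (start1 i j) s1 (start2 i j) s2}"

definition M23_set :: "nat \<Rightarrow> nat \<Rightarrow> nat \<Rightarrow> (int list \<times> int list \<times> int list) set" where
  "M23_set i j n = {(s1, s2, s3) \<in> U_set i j n. walks_intersect (start2 i j) s2 (start3 i j) s3}"

definition M13_set :: "nat \<Rightarrow> nat \<Rightarrow> nat \<Rightarrow> (int list \<times> int list \<times> int list) set" where
  "M13_set i j n = {(s1, s2, s3) \<in> U_set i j n. walks_intersect (start1 i j) s1 (start3 i j) s3}"

definition gf :: "(nat \<Rightarrow> 'a set) \<Rightarrow> int fps" where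
  "gf A = Abs_fps (\<lambda>n. int (card (A n)))"

end

theory Submission
  imports Defs
begin

definition S :: "int list \<Rightarrow> nat \<Rightarrow> int" where "S s k = sum_list (take k s)"

lemma S_0[simp]: "S s 0 = 0" by (simp add: S_def)

lemma step_len: "s \<in> step_seqs n \<Longrightarrow> length s = n" by (simp add: step_seqs_def)

lemma S_step: assumes "s \<in> step_seqs n" "k < n" shows "\<bar>S s (Suc k) - S s k\<bar> = 1"
proof -
  have l: "k < length s" using assms by (simp add: step_seqs_def)
  have "s ! k \<in> {-1,1}" using assms nth_mem[OF l] unfolding step_seqs_def by blast
  moreover have "S s (Suc k) = S s k + s ! k" using l by (simp add: S_def take_Suc_conv_app_nth)
  ultimately show ?thesis by auto
qed

lemma even_sum_pm: "set xs \<subseteq> {-1,1} \<Longrightarrow> even (sum_list xs + int (length xs))"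
proof (induction xs)
  case Nil then show ?case by simp
next
  case (Cons x xs)
  then have "x = -1 \<or> x = 1" "even (sum_list xs + int (length xs))" by auto
  then show ?case by auto
qed

lemma S_parity: assumes "s \<in> step_seqs n" "k \<le> n" shows "even (S s k + int k)"
proof -
  have "set (take k s) \<subseteq> {-1,1}" using assms set_take_subset[of k s] by (auto simp: step_seqs_def)
  moreover have "length (take k s) = k" using assms by (simp add: step_seqs_def)
  ultimately show ?thesis using even_sum_pm[of "take k s"] by (simp add: S_def)
qed

lemma ivt:
  fixes f g :: "nat \<Rightarrow> int"
  assumes "\<forall>k<t. \<bar>f (Suc k) - f k\<bar> \<le> 1" "\<forall>k<t. \<bar>g (Suc k) - g k\<bar> \<le> 1"
    "\<forall>k\<le>t. even (f k - g k)" "f 0 \<le> g 0" "g t \<le> f t"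
  shows "\<exists>e\<le>t. f e = g e"
  using assms
proof (induction t)
  case 0 then show ?case by auto
next
  case (Suc t)
  show ?case
  proof (cases "g t \<le> f t")
    case True
    with Suc.IH Suc.prems have "\<exists>e\<le>t. f e = g e" by auto
    then show ?thesis using le_Suc_eq by blast
  next
    case False
    have "even (f t - g t)" using Suc.prems(3) by auto
    with False have "g t \<ge> f t + 2" by presburger
    moreover have "\<bar>f (Suc t) - f t\<bar> \<le> 1" "\<bar>g (Suc t) - g t\<bar> \<le> 1" using Suc.prems by auto
    ultimately have "f (Suc t) = g (Suc t)" using Suc.prems(5) by arith
    then show ?thesis by blast
  qed
qed

lemma ivt_walk:
  assumes s: "s \<in> step_seqs n" and t: "t \<in> step_seqs n" and "h1 \<le> h2" "even (h2 - h1)" "k \<le> n"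
    "h2 + S t k \<le> h1 + S s k"
  shows "\<exists>e\<le>k. h1 + S s e = h2 + S t e"
proof (rule ivt[where f="\<lambda>e. h1 + S s e" and g="\<lambda>e. h2 + S t e"])
  show "\<forall>e<k. \<bar>h1 + S s (Suc e) - (h1 + S s e)\<bar> \<le> 1"
    using S_step[OF s] assms(5) by fastforce
  show "\<forall>e<k. \<bar>h2 + S t (Suc e) - (h2 + S t e)\<bar> \<le> 1"
    using S_step[OF t] assms(5) by fastforce
  show "\<forall>e\<le>k. even (h1 + S s e - (h2 + S t e))"
  proof (intro allI impI)
    fix e assume "e \<le> k"
    then have "even (S s e + int e)" "even (S t e + int e)" using S_parity s t assms(5) by auto
    then show "even (h1 + S s e - (h2 + S t e))" using assms(4) by presburger
  qed
qed (use assms in auto)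

lemma wi: "s1 \<in> step_seqs n \<Longrightarrow> s2 \<in> step_seqs n \<Longrightarrow>
   walks_intersect h1 s1 h2 s2 \<longleftrightarrow> (\<exists>k\<le>n. h1 + S s1 k = h2 + S s2 k)"
  by (auto simp: walks_intersect_def walk_points_def S_def step_seqs_def)

lemma S_swap:
  assumes "d \<le> length s" "d \<le> length t"
  shows "S (take d s @ drop d t) k = (if k \<le> d then S s k else S s d + (S t k - S t d))"
proof (cases "k \<le> d")
  case True then show ?thesis using assms by (simp add: S_def min_def)
next
  case False
  have "take k t = take d t @ take (k-d) (drop d t)"
    using False take_add[of d "k-d" t] by simp
  then have "sum_list (take (k-d) (drop d t)) = S t k - S t d" by (simp add: S_def)
  then show ?thesis using False assms by (simp add: S_def min_def)
qed

lemma swap_in: "s \<in> step_seqs n \<Longrightarrow> t \<in> step_seqs n \<Longrightarrow> d \<le> n \<Longrightarrow> take d s @ drop d t \<in> step_seqs n"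
  using set_take_subset[of d s] set_drop_subset[of d t] by (auto simp: step_seqs_def)

lemma swap_back: "d \<le> length s \<Longrightarrow> d \<le> length t \<Longrightarrow>
  take d (take d s @ drop d t) @ drop d (take d t @ drop d s) = s"
  by simp

definition mt :: "int \<Rightarrow> int \<Rightarrow> int \<Rightarrow> int list \<Rightarrow> int list \<Rightarrow> int list \<Rightarrow> nat \<Rightarrow> bool" where
  "mt a b c s1 s2 s3 k \<longleftrightarrow> b + S s2 k = a + S s1 k \<or> b + S s2 k = c + S s3 k"

lemma meet13:
  assumes U: "s1 \<in> step_seqs n" "s2 \<in> step_seqs n" "s3 \<in> step_seqs n"
    and h: "a \<le> b" "b \<le> c" "even (b - a)" "even (c - b)"
    and k: "k \<le> n" "a + S s1 k = c + S s3 k"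
  shows "\<exists>e\<le>k. mt a b c s1 s2 s3 e"
proof (cases "b + S s2 k \<le> a + S s1 k")
  case True
  from ivt_walk[OF U(1) U(2) h(1) h(3) k(1) True] show ?thesis by (auto simp: mt_def)
next
  case False
  then have "c + S s3 k \<le> b + S s2 k" using k by simp
  from ivt_walk[OF U(2) U(3) h(2) h(4) k(1) this] show ?thesis by (auto simp: mt_def)
qed


lemma caseA:
  assumes U: "s1 \<in> step_seqs n" "s2 \<in> step_seqs n" "s3 \<in> step_seqs n"
    and h: "a \<le> b" "b \<le> c" "even (b - a)" "even (c - b)"
    and ex: "\<exists>k\<le>n. mt a b c s1 s2 s3 k"
    and d: "d = (LEAST k. mt a b c s1 s2 s3 k)"
    and A: "a + S s1 d = b + S s2 d" "b + S s2 d \<noteq> c + S s3 d"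
    and t1: "t1 = take d s1 @ drop d s2" and t2: "t2 = take d s2 @ drop d s1"
  shows "t1 \<in> step_seqs n \<and> t2 \<in> step_seqs n \<and> (\<exists>k\<le>n. mt a b c t1 t2 s3 k) \<and>
    (LEAST k. mt a b c t1 t2 s3 k) = d \<and>
    a + S t1 d = b + S t2 d \<and> b + S t2 d \<noteq> c + S s3 d \<and>
    take d t1 @ drop d t2 = s1 \<and> take d t2 @ drop d t1 = s2 \<and>
    (((\<exists>k\<le>n. a + S s1 k = b + S s2 k) \<and> (\<exists>k\<le>n. b + S s2 k = c + S s3 k)) \<longleftrightarrow>
     (\<exists>k\<le>n. a + S t1 k = c + S s3 k))"
proof -
  have ln: "length s1 = n" "length s2 = n" "length s3 = n" using U by (auto simp: step_len)
  obtain k0 where k0: "k0 \<le> n" "mt a b c s1 s2 s3 k0" using ex by blast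
  have md: "mt a b c s1 s2 s3 d" using d LeastI[of "mt a b c s1 s2 s3", OF k0(2)] by simp
  have dn: "d \<le> n" using d Least_le[of "mt a b c s1 s2 s3", OF k0(2)] k0(1) by simp
  have before: "\<And>k. k < d \<Longrightarrow> \<not> mt a b c s1 s2 s3 k" using d not_less_Least by blast
  have p1: "\<And>k. a + S t1 k = (if k \<le> d then a + S s1 k else b + S s2 k)"
    using S_swap[of d s1 s2] ln dn A(1) t1 by auto
  have p2: "\<And>k. b + S t2 k = (if k \<le> d then b + S s2 k else a + S s1 k)"
    using S_swap[of d s2 s1] ln dn A(1) t2 by auto
  have same: "\<And>k. k \<le> d \<Longrightarrow> mt a b c t1 t2 s3 k \<longleftrightarrow> mt a b c s1 s2 s3 k"
    using p1 p2 by (simp add: mt_def)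
  have i1: "t1 \<in> step_seqs n" using swap_in U dn t1 by blast
  have i2: "t2 \<in> step_seqs n" using swap_in U dn t2 by blast
  have md': "mt a b c t1 t2 s3 d" using same md by simp
  have L: "(LEAST k. mt a b c t1 t2 s3 k) = d"
  proof (rule Least_equality[where P="mt a b c _ _ _", OF md'])
    fix y assume "mt a b c t1 t2 s3 y"
    then show "d \<le> y" using same before by (meson less_imp_le not_le)
  qed
  have no13: "\<And>k. k \<le> d \<Longrightarrow> a + S s1 k \<noteq> c + S s3 k"
  proof
    fix k assume kd: "k \<le> d" and eq: "a + S s1 k = c + S s3 k"
    show False
    proof (cases "k = d")
      case True then show False using A eq by simp
    next
      case False
      then have "k < d" using kd by simp
      from meet13[OF U h _ eq] this dn obtain e where "e \<le> k" "mt a b c s1 s2 s3 e" by auto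
      then show False using before \<open>k < d\<close> by simp
    qed
  qed
  have e12: "\<exists>k\<le>n. a + S s1 k = b + S s2 k" using A dn by blast
  have e23: "(\<exists>k\<le>n. b + S s2 k = c + S s3 k) \<longleftrightarrow> (\<exists>k. d < k \<and> k \<le> n \<and> b + S s2 k = c + S s3 k)"
  proof
    assume "\<exists>k\<le>n. b + S s2 k = c + S s3 k"
    then obtain k where k: "k \<le> n" "b + S s2 k = c + S s3 k" by blast
    have "\<not> k < d" using before k unfolding mt_def by metis
    moreover have "k \<noteq> d" using A k by auto
    ultimately have "d < k" by simp
    then show "\<exists>k. d < k \<and> k \<le> n \<and> b + S s2 k = c + S s3 k" using k by blast
  qed auto
  have e13: "(\<exists>k\<le>n. a + S t1 k = c + S s3 k) \<longleftrightarrow> (\<exists>k. d < k \<and> k \<le> n \<and> b + S s2 k = c + S s3 k)"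
  proof
    assume "\<exists>k\<le>n. a + S t1 k = c + S s3 k"
    then obtain k where k: "k \<le> n" "a + S t1 k = c + S s3 k" by blast
    have "\<not> k \<le> d" using no13 k p1 by metis
    then have dk: "d < k" by simp
    have "b + S s2 k = c + S s3 k" using k p1[of k] dk by simp
    then show "\<exists>k. d < k \<and> k \<le> n \<and> b + S s2 k = c + S s3 k" using k(1) dk by blast
  next
    assume "\<exists>k. d < k \<and> k \<le> n \<and> b + S s2 k = c + S s3 k"
    then show "\<exists>k\<le>n. a + S t1 k = c + S s3 k" using p1 by (metis not_le)
  qed
  show ?thesis
    using i1 i2 md' dn L p1 p2 A e12 e23 e13 swap_back[of d s1 s2] swap_back[of d s2 s1] ln t1 t2
    by auto
qed

lemma caseB:
  assumes U: "s1 \<in> step_seqs n" "s2 \<in> step_seqs n" "s3 \<in> step_seqs n"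
    and h: "a \<le> b" "b \<le> c" "even (b - a)" "even (c - b)"
    and ex: "\<exists>k\<le>n. mt a b c s1 s2 s3 k"
    and d: "d = (LEAST k. mt a b c s1 s2 s3 k)"
    and B: "b + S s2 d = c + S s3 d" "a + S s1 d \<noteq> b + S s2 d"
    and t2: "t2 = take d s2 @ drop d s3" and t3: "t3 = take d s3 @ drop d s2"
  shows "t2 \<in> step_seqs n \<and> t3 \<in> step_seqs n \<and> (\<exists>k\<le>n. mt a b c s1 t2 t3 k) \<and>
    (LEAST k. mt a b c s1 t2 t3 k) = d \<and>
    b + S t2 d = c + S t3 d \<and> a + S s1 d \<noteq> b + S t2 d \<and>
    take d t2 @ drop d t3 = s2 \<and> take d t3 @ drop d t2 = s3 \<and>
    (((\<exists>k\<le>n. a + S s1 k = b + S s2 k) \<and> (\<exists>k\<le>n. b + S s2 k = c + S s3 k)) \<longleftrightarrow>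
     (\<exists>k\<le>n. a + S s1 k = c + S t3 k))"
proof -
  have ln: "length s1 = n" "length s2 = n" "length s3 = n" using U by (auto simp: step_len)
  obtain k0 where k0: "k0 \<le> n" "mt a b c s1 s2 s3 k0" using ex by blast
  have md: "mt a b c s1 s2 s3 d" using d LeastI[of "mt a b c s1 s2 s3", OF k0(2)] by simp
  have dn: "d \<le> n" using d Least_le[of "mt a b c s1 s2 s3", OF k0(2)] k0(1) by simp
  have before: "\<And>k. k < d \<Longrightarrow> \<not> mt a b c s1 s2 s3 k" using d not_less_Least by blast
  have p2: "\<And>k. b + S t2 k = (if k \<le> d then b + S s2 k else c + S s3 k)"
    using S_swap[of d s2 s3] ln dn B(1) t2 by auto
  have p3: "\<And>k. c + S t3 k = (if k \<le> d then c + S s3 k else b + S s2 k)"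
    using S_swap[of d s3 s2] ln dn B(1) t3 by auto
  have same: "\<And>k. k \<le> d \<Longrightarrow> mt a b c s1 t2 t3 k \<longleftrightarrow> mt a b c s1 s2 s3 k"
    using p2 p3 by (simp add: mt_def)
  have i2: "t2 \<in> step_seqs n" using swap_in U dn t2 by blast
  have i3: "t3 \<in> step_seqs n" using swap_in U dn t3 by blast
  have md': "mt a b c s1 t2 t3 d" using same md by simp
  have L: "(LEAST k. mt a b c s1 t2 t3 k) = d"
  proof (rule Least_equality[where P="mt a b c _ _ _", OF md'])
    fix y assume "mt a b c s1 t2 t3 y"
    then show "d \<le> y" using same before by (meson less_imp_le not_le)
  qed
  have no13: "\<And>k. k \<le> d \<Longrightarrow> a + S s1 k \<noteq> c + S s3 k"
  proof
    fix k assume kd: "k \<le> d" and eq: "a + S s1 k = c + S s3 k"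
    show False
    proof (cases "k = d")
      case True then show False using B eq by simp
    next
      case False
      then have "k < d" using kd by simp
      from meet13[OF U h _ eq] this dn obtain e where "e \<le> k" "mt a b c s1 s2 s3 e" by auto
      then show False using before \<open>k < d\<close> by simp
    qed
  qed
  have e23: "\<exists>k\<le>n. b + S s2 k = c + S s3 k" using B dn by blast
  have e12: "(\<exists>k\<le>n. a + S s1 k = b + S s2 k) \<longleftrightarrow> (\<exists>k. d < k \<and> k \<le> n \<and> a + S s1 k = b + S s2 k)"
  proof
    assume "\<exists>k\<le>n. a + S s1 k = b + S s2 k"
    then obtain k where k: "k \<le> n" "a + S s1 k = b + S s2 k" by blast
    have "\<not> k < d" using before k unfolding mt_def by metis
    moreover have "k \<noteq> d" using B k by auto
    ultimately have "d < k" by simp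
    then show "\<exists>k. d < k \<and> k \<le> n \<and> a + S s1 k = b + S s2 k" using k by blast
  qed auto
  have e13: "(\<exists>k\<le>n. a + S s1 k = c + S t3 k) \<longleftrightarrow> (\<exists>k. d < k \<and> k \<le> n \<and> a + S s1 k = b + S s2 k)"
  proof
    assume "\<exists>k\<le>n. a + S s1 k = c + S t3 k"
    then obtain k where k: "k \<le> n" "a + S s1 k = c + S t3 k" by blast
    have "\<not> k \<le> d" using no13 k p3 by metis
    then have dk: "d < k" by simp
    have "a + S s1 k = b + S s2 k" using k p3[of k] dk by simp
    then show "\<exists>k. d < k \<and> k \<le> n \<and> a + S s1 k = b + S s2 k" using k(1) dk by blast
  next
    assume "\<exists>k. d < k \<and> k \<le> n \<and> a + S s1 k = b + S s2 k"
    then show "\<exists>k\<le>n. a + S s1 k = c + S t3 k" using p3 by (metis not_le)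
  qed
  show ?thesis
    using i2 i3 md' dn L p2 p3 B e12 e23 e13 swap_back[of d s2 s3] swap_back[of d s3 s2] ln t2 t3
    by auto
qed


definition Phi :: "int \<Rightarrow> int \<Rightarrow> int \<Rightarrow> nat \<Rightarrow> int list \<times> int list \<times> int list \<Rightarrow> int list \<times> int list \<times> int list" where
  "Phi a b c n T = (case T of (s1, s2, s3) \<Rightarrow>
     (if \<exists>k\<le>n. mt a b c s1 s2 s3 k then
       (let d = (LEAST k. mt a b c s1 s2 s3 k) in
         if a + S s1 d = b + S s2 d \<and> b + S s2 d \<noteq> c + S s3 d
         then (take d s1 @ drop d s2, take d s2 @ drop d s1, s3)
         else if b + S s2 d = c + S s3 d \<and> a + S s1 d \<noteq> b + S s2 d
         then (s1, take d s2 @ drop d s3, take d s3 @ drop d s2)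
         else (s1, s2, s3))
     else (s1, s2, s3)))"

definition I :: "int \<Rightarrow> int list \<Rightarrow> int \<Rightarrow> int list \<Rightarrow> nat \<Rightarrow> bool" where
  "I h1 s1 h2 s2 n \<longleftrightarrow> (\<exists>k\<le>n. h1 + S s1 k = h2 + S s2 k)"

lemma Phi_props:
  assumes U: "s1 \<in> step_seqs n" "s2 \<in> step_seqs n" "s3 \<in> step_seqs n"
    and h: "a \<le> b" "b \<le> c" "even (b - a)" "even (c - b)"
    and P: "Phi a b c n (s1, s2, s3) = (t1, t2, t3)"
  shows "t1 \<in> step_seqs n \<and> t2 \<in> step_seqs n \<and> t3 \<in> step_seqs n \<and>
    Phi a b c n (t1, t2, t3) = (s1, s2, s3) \<and>
    ((I a s1 b s2 n \<and> I b s2 c s3 n) \<longleftrightarrow> I a t1 c t3 n)"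
proof (cases "\<exists>k\<le>n. mt a b c s1 s2 s3 k")
  case ex: True
  define d where "d = (LEAST k. mt a b c s1 s2 s3 k)"
  show ?thesis
  proof (cases "a + S s1 d = b + S s2 d \<and> b + S s2 d \<noteq> c + S s3 d")
    case A: True
    have Pe: "t1 = take d s1 @ drop d s2" "t2 = take d s2 @ drop d s1" "t3 = s3"
      using P ex A by (auto simp: Phi_def Let_def d_def[symmetric])
    from caseA[OF U h ex d_def A[THEN conjunct1] A[THEN conjunct2] Pe(1) Pe(2)] Pe(3) U(3)
    show ?thesis by (auto simp: Phi_def Let_def I_def)
  next
    case nA: False
    show ?thesis
    proof (cases "b + S s2 d = c + S s3 d \<and> a + S s1 d \<noteq> b + S s2 d")
      case B: True
      have Pe: "t2 = take d s2 @ drop d s3" "t3 = take d s3 @ drop d s2" "t1 = s1"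
        using P ex nA B by (auto simp: Phi_def Let_def d_def[symmetric])
      from caseB[OF U h ex d_def B[THEN conjunct1] B[THEN conjunct2] Pe(1) Pe(2)] Pe(3) U(1)
      show ?thesis by (auto simp: Phi_def Let_def I_def)
    next
      case nB: False
      have Pe: "t1 = s1" "t2 = s2" "t3 = s3"
        using P ex nA nB by (auto simp: Phi_def Let_def d_def[symmetric])
      obtain k0 where k0: "k0 \<le> n" "mt a b c s1 s2 s3 k0" using ex by blast
      have md: "mt a b c s1 s2 s3 d" using d_def LeastI[of "mt a b c s1 s2 s3", OF k0(2)] by simp
      have dn: "d \<le> n" using d_def Least_le[of "mt a b c s1 s2 s3", OF k0(2)] k0(1) by simp
      have both: "a + S s1 d = b + S s2 d" "b + S s2 d = c + S s3 d"
        using md nA nB unfolding mt_def by auto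
      have "I a s1 b s2 n" "I b s2 c s3 n" "I a s1 c s3 n"
        using both dn unfolding I_def by (metis, metis, metis)
      then show ?thesis using Pe U P by auto
    qed
  qed
next
  case nex: False
  have Pe: "t1 = s1" "t2 = s2" "t3 = s3" using P nex by (auto simp: Phi_def)
  have n12: "\<not> I a s1 b s2 n" using nex unfolding I_def mt_def by metis
  have n13: "\<not> I a s1 c s3 n"
  proof
    assume "I a s1 c s3 n"
    then obtain k where k: "k \<le> n" "a + S s1 k = c + S s3 k" unfolding I_def by blast
    from meet13[OF U h k] k(1) nex show False by auto
  qed
  show ?thesis using Pe U P n12 n13 by auto
qed

theorem proposition3p1:
  fixes i j :: nat
  assumes "i \<ge> 1" and "j \<ge> 1"
  shows "gf (V_set i j) = gf (U_set i j) + gf (M13_set i j) - gf (M12_set i j) - gf (M23_set i j)"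
proof -
  define a where "a = start1 i j"
  define b where "b = start2 i j"
  define c where "c = start3 i j"
  have h: "a \<le> b" "b \<le> c" "even (b - a)" "even (c - b)"
    by (auto simp: a_def b_def c_def start1_def start2_def start3_def)
  have fin: "finite (step_seqs n)" for n
  proof -
    have "step_seqs n \<subseteq> {xs. set xs \<subseteq> {-1,1} \<and> length xs = n}" by (auto simp: step_seqs_def)
    moreover have "finite {xs. set xs \<subseteq> {-1::int,1} \<and> length xs = n}"
      by (rule finite_lists_length_eq) simp
    ultimately show ?thesis by (rule finite_subset)
  qed
  have finU: "finite (U_set i j n)" for n using fin by (simp add: U_set_def)
  have m12: "T \<in> M12_set i j n \<longleftrightarrow> T \<in> U_set i j n \<and> I a (fst T) b (fst (snd T)) n" for T n
    by (cases T) (auto simp: M12_set_def U_set_def wi I_def a_def b_def)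
  have m23: "T \<in> M23_set i j n \<longleftrightarrow> T \<in> U_set i j n \<and> I b (fst (snd T)) c (snd (snd T)) n" for T n
    by (cases T) (auto simp: M23_set_def U_set_def wi I_def c_def b_def)
  have m13: "T \<in> M13_set i j n \<longleftrightarrow> T \<in> U_set i j n \<and> I a (fst T) c (snd (snd T)) n" for T n
    by (cases T) (auto simp: M13_set_def U_set_def wi I_def a_def c_def)
  have vv: "V_set i j n = U_set i j n - (M12_set i j n \<union> M23_set i j n)" for n
  proof -
    have "T \<in> V_set i j n \<longleftrightarrow> T \<in> U_set i j n - (M12_set i j n \<union> M23_set i j n)" for T
    proof (cases T)
      case (fields s1 s2 s3)
      show ?thesis
      proof (cases "T \<in> U_set i j n")
        case True
        then have U: "s1 \<in> step_seqs n" "s2 \<in> step_seqs n" "s3 \<in> step_seqs n"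
          using fields by (auto simp: U_set_def)
        have "I a s1 c s3 n \<Longrightarrow> I a s1 b s2 n \<or> I b s2 c s3 n"
        proof -
          assume "I a s1 c s3 n"
          then obtain k where k: "k \<le> n" "a + S s1 k = c + S s3 k" unfolding I_def by blast
          from meet13[OF U h k] k(1) show ?thesis unfolding I_def mt_def by (metis le_trans)
        qed
        then show ?thesis using m12[of T n] m23[of T n] m13[of T n] fields True
          by (auto simp: V_set_def M13_set_def M12_set_def M23_set_def)
      next
        case False
        then show ?thesis by (auto simp: V_set_def)
      qed
    qed
    then show ?thesis by blast
  qed
  have bij: "bij_betw (Phi a b c n) (M12_set i j n \<inter> M23_set i j n) (M13_set i j n)" for n
  proof -
    have key: "T \<in> U_set i j n \<Longrightarrow> Phi a b c n T \<in> U_set i j n \<and> Phi a b c n (Phi a b c n T) = T \<and>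
       (T \<in> M12_set i j n \<inter> M23_set i j n \<longleftrightarrow> Phi a b c n T \<in> M13_set i j n)" for T
    proof -
      assume TU: "T \<in> U_set i j n"
      obtain s1 s2 s3 where T: "T = (s1, s2, s3)" by (cases T)
      obtain t1 t2 t3 where P: "Phi a b c n (s1, s2, s3) = (t1, t2, t3)" by (cases "Phi a b c n (s1, s2, s3)")
      have U: "s1 \<in> step_seqs n" "s2 \<in> step_seqs n" "s3 \<in> step_seqs n" using TU T by (auto simp: U_set_def)
      from Phi_props[OF U h P] show ?thesis
        using T P m12[of T n] m23[of T n] m13[of "(t1,t2,t3)" n] TU by (auto simp: U_set_def)
    qed
    show ?thesis
    proof (rule bij_betw_byWitness[where f'="Phi a b c n"])
      show "\<forall>x\<in>M12_set i j n \<inter> M23_set i j n. Phi a b c n (Phi a b c n x) = x"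
        using key m12 by blast
      show "\<forall>x\<in>M13_set i j n. Phi a b c n (Phi a b c n x) = x"
        using key m13 by blast
      show "Phi a b c n ` (M12_set i j n \<inter> M23_set i j n) \<subseteq> M13_set i j n"
        using key m12 by blast
      show "Phi a b c n ` M13_set i j n \<subseteq> M12_set i j n \<inter> M23_set i j n"
      proof
        fix y assume "y \<in> Phi a b c n ` M13_set i j n"
        then obtain x where x: "x \<in> M13_set i j n" "y = Phi a b c n x" by blast
        have xU: "x \<in> U_set i j n" using x m13 by blast
        have "Phi a b c n y = x" using key[OF xU] x by simp
        moreover have yU: "y \<in> U_set i j n" using key[OF xU] x by simp
        ultimately show "y \<in> M12_set i j n \<inter> M23_set i j n" using key[OF yU] x by simp
      qed
    qed
  qed
  have cnt: "int (card (V_set i j n)) = int (card (U_set i j n)) + int (card (M13_set i j n))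
      - int (card (M12_set i j n)) - int (card (M23_set i j n))" for n
  proof -
    have s12: "M12_set i j n \<subseteq> U_set i j n" "M23_set i j n \<subseteq> U_set i j n"
      using m12 m23 by blast+
    have f12: "finite (M12_set i j n)" "finite (M23_set i j n)"
      using s12 finU finite_subset by blast+
    have c1: "card (V_set i j n) = card (U_set i j n) - card (M12_set i j n \<union> M23_set i j n)"
      using vv card_Diff_subset[of "M12_set i j n \<union> M23_set i j n" "U_set i j n"] f12 s12 by auto
    have c2: "card (M12_set i j n \<union> M23_set i j n) + card (M12_set i j n \<inter> M23_set i j n)
        = card (M12_set i j n) + card (M23_set i j n)"
      using card_Un_Int[OF f12] by simp
    have c3: "card (M12_set i j n \<inter> M23_set i j n) = card (M13_set i j n)"
      using bij_betw_same_card[OF bij] .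
    have c4: "card (M12_set i j n \<union> M23_set i j n) \<le> card (U_set i j n)"
      using card_mono[OF finU] s12 by (meson Un_least)
    show ?thesis using c1 c2 c3 c4 by linarith
  qed
  show ?thesis
    by (rule fps_ext) (simp add: gf_def cnt)
qed

end
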